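(* With the notation of the context, let $\Sigma:=\sum_{j\in A}\sigma_j$. Then $\Sigma=\frac{|A|}{|G|^k}\sum_{x\in A^k}\sum_{w\in A}\eta^x_w\,|x,S^x_w\rangle\langle x,S^x_w|$, each $\sigma_d$ is a density operator, the pretty good measurement operators $\Sigma^{-1/2}\sigma_j\Sigma^{-1/2}$ (inverse on the support of $\Sigma$) equal $$E_j=\frac{1}{|A|}\sum_{x\in A^k}\sum_{w,v\in A}\chi_w(j)\overline{\chi_v(j)}\,|x,S^x_w\rangle\langle x,S^x_v|,$$ and for every $d\in A$, $$\mathrm{tr}(E_d\sigma_d)=\frac{p}{|G|^{k+1}}\sum_{x\in A^k}\Big(\sum_{w\in A}\sqrt{\eta^x_w}\Big)^2 .$$
   Context: $A$ finite abelian group, $p$ prime, $\varphi\in\mathrm{Aut}(A)$ with $\varphi^p=\mathrm{id}$, $|G|:=p|A|$, $k\ge1$. $\{\chi_x\}_{x\in A}$ are the characters of $A$ indexed so that $\chi_x\chi_{x'}=\chi_{x+x'}$ and $\chi_x(y)=\chi_y(x)$. For $b\in\mathbb{Z}_p$ (identified with $\{0,\dots,p-1\}$) let $\Phi_b:=\sum_{i=0}^{b-1}\varphi^i$ and let $\hat\Phi_b:A\to A$ be a function with $\chi_x(\Phi_b(d))=\chi_{\hat\Phi_b(x)}(d)$ for all $x,d\in A$. For $x\in A^k$, $b\in\mathbb{Z}_p^k$ put $\hat\Phi_b(x):=\sum_{j=1}^k\hat\Phi_{b_j}(x_j)$; $S^x_w:=\{b\in\mathbb{Z}_p^k:\hat\Phi_b(x)=w\}$,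 $\eta^x_w:=|S^x_w|$, $|S^x_w\rangle:=\eta_w^{x\,-1/2}\sum_{b\in S^x_w}|b\rangle$ (and $|S^x_w\rangle:=0$ if $\eta^x_w=0$), vectors in $\mathbb{C}^{A^k}\otimes\mathbb{C}^{\mathbb{Z}_p^k}$. For $d\in A$ define $\sigma_d:=\frac{1}{|G|^k}\sum_{x\in A^k}\sum_{w,v\in A}\chi_w(d)\overline{\chi_v(d)}\sqrt{\eta^x_w\eta^x_v}\,|x,S^x_w\rangle\langle x,S^x_v|$ (this is the Fourier-transformed $k$-copy hidden subgroup state for $\langle(d,1)\rangle$). *)

theory Defs
  imports Complex_Main "HOL-Library.Cardinality" "HOL-Computational_Algebra.Primes"
begin

text \<open>An operator on the space C^I is a function i => j => complex; only the
entries with i, j in I matter.\<close>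

definition op_mult :: "'i set \<Rightarrow> ('i \<Rightarrow> 'i \<Rightarrow> complex) \<Rightarrow> ('i \<Rightarrow> 'i \<Rightarrow> complex) \<Rightarrow> ('i \<Rightarrow> 'i \<Rightarrow> complex)" where
  "op_mult I M N = (\<lambda>i j. \<Sum>l\<in>I. M i l * N l j)"

definition op_trace :: "'i set \<Rightarrow> ('i \<Rightarrow> 'i \<Rightarrow> complex) \<Rightarrow> complex" where
  "op_trace I M = (\<Sum>i\<in>I. M i i)"

definition ketbra :: "('i \<Rightarrow> complex) \<Rightarrow> ('i \<Rightarrow> complex) \<Rightarrow> ('i \<Rightarrow> 'i \<Rightarrow> complex)" where
  "ketbra u v = (\<lambda>i j. u i * cnj (v j))"

definition vinner :: "'i set \<Rightarrow> ('i \<Rightarrow> complex) \<Rightarrow> ('i \<Rightarrow> complex) \<Rightarrow> complex" where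
  "vinner I u v = (\<Sum>i\<in>I. cnj (u i) * v i)"

definition hermitian_op :: "'i set \<Rightarrow> ('i \<Rightarrow> 'i \<Rightarrow> complex) \<Rightarrow> bool" where
  "hermitian_op I M \<longleftrightarrow> (\<forall>i\<in>I. \<forall>j\<in>I. M j i = cnj (M i j))"

definition psd_op :: "'i set \<Rightarrow> ('i \<Rightarrow> 'i \<Rightarrow> complex) \<Rightarrow> bool" where
  "psd_op I M \<longleftrightarrow> (\<forall>v. Im (\<Sum>i\<in>I. \<Sum>j\<in>I. cnj (v i) * M i j * v j) = 0
                       \<and> Re (\<Sum>i\<in>I. \<Sum>j\<in>I. cnj (v i) * M i j * v j) \<ge> 0)"

definition density_op :: "'i set \<Rightarrow> ('i \<Rightarrow> 'i \<Rightarrow> complex) \<Rightarrow> bool" where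
  "density_op I M \<longleftrightarrow> hermitian_op I M \<and> psd_op I M \<and> op_trace I M = 1"

text \<open>R is the inverse square root of M on the support of M: M has a spectral
decomposition M = sum_a lambda_a |e_a><e_a| with an orthonormal family (e_a) and
strictly positive eigenvalues lambda_a (the nonzero part of the spectrum), and
R = sum_a lambda_a^(-1/2) |e_a><e_a|.\<close>
definition is_pinv_sqrt :: "'i set \<Rightarrow> ('i \<Rightarrow> 'i \<Rightarrow> complex) \<Rightarrow> ('i \<Rightarrow> 'i \<Rightarrow> complex) \<Rightarrow> bool" where
  "is_pinv_sqrt I M R \<longleftrightarrow>
     (\<exists>(n::nat) (e::nat \<Rightarrow> 'i \<Rightarrow> complex) (lam::nat \<Rightarrow> real).
        (\<forall>a<n. \<forall>b<n. vinner I (e a) (e b) = (if a = b then 1 else 0)) \<and>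
        (\<forall>a<n. lam a > 0) \<and>
        (\<forall>i\<in>I. \<forall>j\<in>I. M i j = (\<Sum>a<n. complex_of_real (lam a) * ketbra (e a) (e a) i j)) \<and>
        (\<forall>i\<in>I. \<forall>j\<in>I. R i j = (\<Sum>a<n. complex_of_real (1 / sqrt (lam a)) * ketbra (e a) (e a) i j)))"

definition Ak :: "nat \<Rightarrow> 'a list set" where
  "Ak k = {x. length x = k}"

definition Zpk :: "nat \<Rightarrow> nat \<Rightarrow> nat list set" where
  "Zpk p k = {b. length b = k \<and> (\<forall>c\<in>set b. c < p)}"

definition index_set :: "nat \<Rightarrow> nat \<Rightarrow> ('a list \<times> nat list) set" where
  "index_set p k = Ak k \<times> Zpk p k"

definition Phi :: "('a::ab_group_add \<Rightarrow> 'a) \<Rightarrow> nat \<Rightarrow> 'a \<Rightarrow> 'a" where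
  "Phi phi b d = (\<Sum>i<b. (phi ^^ i) d)"

definition hatPhi_vec :: "(nat \<Rightarrow> 'a::ab_group_add \<Rightarrow> 'a) \<Rightarrow> nat \<Rightarrow> 'a list \<Rightarrow> nat list \<Rightarrow> 'a" where
  "hatPhi_vec hPhi k x b = (\<Sum>j<k. hPhi (b ! j) (x ! j))"

definition Sset :: "(nat \<Rightarrow> 'a::ab_group_add \<Rightarrow> 'a) \<Rightarrow> nat \<Rightarrow> nat \<Rightarrow> 'a list \<Rightarrow> 'a \<Rightarrow> nat list set" where
  "Sset hPhi p k x w = {b \<in> Zpk p k. hatPhi_vec hPhi k x b = w}"

definition eta :: "(nat \<Rightarrow> 'a::ab_group_add \<Rightarrow> 'a) \<Rightarrow> nat \<Rightarrow> nat \<Rightarrow> 'a list \<Rightarrow> 'a \<Rightarrow> nat" where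
  "eta hPhi p k x w = card (Sset hPhi p k x w)"

text \<open>The vector |x, S^x_w> (which is 0 if S^x_w is empty).\<close>
definition ketS :: "(nat \<Rightarrow> 'a::ab_group_add \<Rightarrow> 'a) \<Rightarrow> nat \<Rightarrow> nat \<Rightarrow> 'a list \<Rightarrow> 'a
                     \<Rightarrow> ('a list \<times> nat list) \<Rightarrow> complex" where
  "ketS hPhi p k x w = (\<lambda>(y, b). if y = x \<and> b \<in> Sset hPhi p k x w
       then complex_of_real (1 / sqrt (real (eta hPhi p k x w))) else 0)"

definition sigma :: "('a::{ab_group_add,finite} \<Rightarrow> 'a \<Rightarrow> complex) \<Rightarrow> (nat \<Rightarrow> 'a \<Rightarrow> 'a) \<Rightarrow> nat \<Rightarrow> nat \<Rightarrow> 'a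
     \<Rightarrow> ('a list \<times> nat list) \<Rightarrow> ('a list \<times> nat list) \<Rightarrow> complex" where
  "sigma chi hPhi p k d = (\<lambda>i j. (1 / of_nat ((p * CARD('a)) ^ k)) *
     (\<Sum>x\<in>Ak k. \<Sum>w\<in>UNIV. \<Sum>v\<in>UNIV. chi w d * cnj (chi v d) *
        complex_of_real (sqrt (real (eta hPhi p k x w * eta hPhi p k x v))) *
        ketbra (ketS hPhi p k x w) (ketS hPhi p k x v) i j))"

definition SigmaOp :: "('a::{ab_group_add,finite} \<Rightarrow> 'a \<Rightarrow> complex) \<Rightarrow> (nat \<Rightarrow> 'a \<Rightarrow> 'a) \<Rightarrow> nat \<Rightarrow> nat
     \<Rightarrow> ('a list \<times> nat list) \<Rightarrow> ('a list \<times> nat list) \<Rightarrow> complex" where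
  "SigmaOp chi hPhi p k = (\<lambda>i j. \<Sum>d\<in>UNIV. sigma chi hPhi p k d i j)"

definition Eop :: "('a::{ab_group_add,finite} \<Rightarrow> 'a \<Rightarrow> complex) \<Rightarrow> (nat \<Rightarrow> 'a \<Rightarrow> 'a) \<Rightarrow> nat \<Rightarrow> nat \<Rightarrow> 'a
     \<Rightarrow> ('a list \<times> nat list) \<Rightarrow> ('a list \<times> nat list) \<Rightarrow> complex" where
  "Eop chi hPhi p k j = (\<lambda>i i'. (1 / of_nat CARD('a)) *
     (\<Sum>x\<in>Ak k. \<Sum>w\<in>UNIV. \<Sum>v\<in>UNIV. chi w j * cnj (chi v j) *
        ketbra (ketS hPhi p k x w) (ketS hPhi p k x v) i i'))"

end

theory Submission
  imports Defs
begin


locale chars =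
  fixes chi :: "'a::{ab_group_add,finite} \<Rightarrow> 'a \<Rightarrow> complex"
  assumes chi_nonzero: "\<And>x y. chi x y \<noteq> 0"
    and chi_hom: "\<And>x y z. chi x (y + z) = chi x y * chi x z"
    and chi_add: "\<And>x x' y. chi (x + x') y = chi x y * chi x' y"
    and chi_inj: "inj chi"
begin

lemma chi_zero1: "chi 0 d = 1"
proof -
  have "chi 0 d = chi 0 d * chi 0 d" using chi_add[of 0 0 d] by simp
  then show ?thesis using chi_nonzero[of 0 d] by (metis mult_cancel_left2)
qed

lemma chi_zero2: "chi x 0 = 1"
proof -
  have "chi x 0 = chi x 0 * chi x 0" using chi_hom[of x 0 0] by simp
  then show ?thesis using chi_nonzero[of x 0] by (metis mult_cancel_left2)
qed

lemma chi_pow: "chi x (\<Sum>i<m. y) = chi x y ^ m"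
  by (induction m) (simp_all add: chi_zero2 chi_hom)

lemma chi_norm: "norm (chi x y) = 1"
proof -
  have "\<not> inj (\<lambda>m::nat. (\<Sum>i<m. y))"
  proof
    assume "inj (\<lambda>m::nat. (\<Sum>i<m. y))"
    then have "infinite (range (\<lambda>m::nat. (\<Sum>i<m. y)))"
      using finite_imageD infinite_UNIV_nat by blast
    then show False by simp
  qed
  then obtain m m' :: nat where mm: "m \<noteq> m'" "(\<Sum>i<m. y) = (\<Sum>i<m'. y)"
    unfolding inj_def by blast
  then have eq: "chi x y ^ m = chi x y ^ m'" using chi_pow by metis
  have "\<exists>a b::nat. a < b \<and> chi x y ^ a = chi x y ^ b"
    using mm eq by (metis nat_neq_iff)
  then obtain a b :: nat where ab: "a < b" "chi x y ^ a = chi x y ^ b" by blast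
  have "chi x y ^ a * chi x y ^ (b - a) = chi x y ^ b"
    using ab(1) by (simp add: power_add[symmetric])
  then have "chi x y ^ a * 1 = chi x y ^ a * chi x y ^ (b - a)"
    using ab(2) by simp
  then have "chi x y ^ (b - a) = 1" using chi_nonzero
    by (metis mult_cancel_left power_not_zero)
  then show ?thesis using ab(1) power_eq_1_iff by fastforce
qed

lemma chi_cnj: "cnj (chi x y) = chi (-x) y"
proof -
  have "chi (-x) y * chi x y = 1" using chi_add[of "-x" x y] chi_zero1 by simp
  moreover have "cnj (chi x y) * chi x y = 1"
    using chi_norm[of x y] complex_norm_square[of "chi x y"] by (simp add: mult.commute)
  ultimately show ?thesis using chi_nonzero[of x y]
    by (metis mult_cancel_right)
qed

lemma chi_abs2: "chi x y * cnj (chi x y) = 1"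
  using chi_norm[of x y] complex_norm_square[of "chi x y"] by simp

lemma chi_orth: "(\<Sum>d\<in>UNIV. chi w d * cnj (chi v d)) = (if w = v then of_nat CARD('a) else 0)"
proof (cases "w = v")
  case True
  then show ?thesis by (simp add: chi_abs2)
next
  case False
  define u where "u = w - v"
  have u0: "u \<noteq> 0" using False u_def by simp
  have eq: "chi w d * cnj (chi v d) = chi u d" for d
    by (simp add: chi_cnj u_def chi_add[symmetric])
  have "chi u \<noteq> chi 0" using chi_inj u0 by (meson injD)
  then obtain e where e: "chi u e \<noteq> 1" using chi_zero1 by fastforce
  have "(\<Sum>d\<in>UNIV. chi u d) = (\<Sum>d\<in>UNIV. chi u (d + e))"
    by (rule sum.reindex_bij_witness[where i="\<lambda>d. d + e" and j="\<lambda>d. d - e"]) auto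
  also have "\<dots> = chi u e * (\<Sum>d\<in>UNIV. chi u d)"
    by (simp add: chi_hom sum_distrib_left mult.commute)
  finally have "(\<Sum>d\<in>UNIV. chi u d) = 0" using e
    by (metis mult_cancel_right2 mult.commute)
  then show ?thesis using False by (simp add: eq)
qed

end


definition appl :: "'i set \<Rightarrow> ('i \<Rightarrow> 'i \<Rightarrow> complex) \<Rightarrow> ('i \<Rightarrow> complex) \<Rightarrow> 'i \<Rightarrow> complex" where
  "appl I M u = (\<lambda>i. \<Sum>l\<in>I. M i l * u l)"

lemma vinner_sum_right:
  "vinner I u (\<lambda>i. \<Sum>t\<in>T. c t * v t i) = (\<Sum>t\<in>T. c t * vinner I u (v t))"
  unfolding vinner_def by (simp add: sum_distrib_left sum_distrib_right algebra_simps sum.swap[of _ I])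

lemma vinner_sum_left:
  "vinner I (\<lambda>i. \<Sum>t\<in>T. c t * v t i) u = (\<Sum>t\<in>T. cnj (c t) * vinner I (v t) u)"
  unfolding vinner_def by (simp add: sum_distrib_left sum_distrib_right algebra_simps sum.swap[of _ I])

lemma ketbra_sum:
  "(\<Sum>w\<in>W. \<Sum>v\<in>V. a w * cnj (b v) * ketbra (f w) (g v) i j)
    = ketbra (\<lambda>i. \<Sum>w\<in>W. a w * f w i) (\<lambda>i. \<Sum>v\<in>V. b v * g v i) i j"
  unfolding ketbra_def by (simp add: sum_distrib_left sum_distrib_right algebra_simps sum.swap[where A=V and B=W])

lemma trace_ketsum:
  "op_trace I (\<lambda>i j. a * (\<Sum>x\<in>X. ketbra (u x) (u x) i j)) = a * (\<Sum>x\<in>X. vinner I (u x) (u x))"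
  unfolding op_trace_def vinner_def ketbra_def
  by (simp add: sum_distrib_left algebra_simps sum.swap[of _ I])

lemma trace_prod:
  "op_trace I (op_mult I (\<lambda>i j. a * (\<Sum>x\<in>X. ketbra (u x) (u x) i j))
                          (\<lambda>i j. b * (\<Sum>y\<in>Y. ketbra (v y) (v y) i j)))
   = a * b * (\<Sum>x\<in>X. \<Sum>y\<in>Y. vinner I (u x) (v y) * vinner I (v y) (u x))"
proof -
  have "op_trace I (op_mult I (\<lambda>i j. a * (\<Sum>x\<in>X. ketbra (u x) (u x) i j))
                          (\<lambda>i j. b * (\<Sum>y\<in>Y. ketbra (v y) (v y) i j)))
     = (\<Sum>i\<in>I. \<Sum>l\<in>I. \<Sum>x\<in>X. \<Sum>y\<in>Y. a * b * (u x i * cnj (u x l) * v y l * cnj (v y i)))"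
    unfolding op_trace_def op_mult_def ketbra_def
    by (simp add: sum_product sum_distrib_left algebra_simps sum.swap[where A=Y and B=X])
  also have "\<dots> = (\<Sum>x\<in>X. \<Sum>y\<in>Y. \<Sum>i\<in>I. \<Sum>l\<in>I. a * b * (u x i * cnj (u x l) * v y l * cnj (v y i)))"
    by (simp add: sum.swap[where A=I and B=X] sum.swap[where A=I and B=Y] sum.swap[where A=Y and B=X])
  also have "\<dots> = a * b * (\<Sum>x\<in>X. \<Sum>y\<in>Y. vinner I (u x) (v y) * vinner I (v y) (u x))"
  proof -
    have "(\<Sum>i\<in>I. \<Sum>l\<in>I. a * b * (u x i * cnj (u x l) * v y l * cnj (v y i)))
        = a * b * ((\<Sum>l\<in>I. cnj (u x l) * v y l) * (\<Sum>i\<in>I. cnj (v y i) * u x i))" for x y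
    proof -
      have "(\<Sum>l\<in>I. cnj (u x l) * v y l) * (\<Sum>i\<in>I. cnj (v y i) * u x i)
          = (\<Sum>l\<in>I. \<Sum>i\<in>I. (cnj (u x l) * v y l) * (cnj (v y i) * u x i))"
        by (rule sum_product)
      also have "\<dots> = (\<Sum>i\<in>I. \<Sum>l\<in>I. (cnj (u x l) * v y l) * (cnj (v y i) * u x i))"
        by (rule sum.swap)
      finally show ?thesis by (simp add: sum_distrib_left algebra_simps)
    qed
    then show ?thesis unfolding vinner_def by (simp add: sum_distrib_left)
  qed
  finally show ?thesis .
qed

lemma herm_ketsum:
  "hermitian_op I (\<lambda>i j. complex_of_real a * (\<Sum>x\<in>X. ketbra (u x) (u x) i j))"
  unfolding hermitian_op_def ketbra_def by (simp add: mult.commute)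

lemma psd_ketsum:
  assumes "a \<ge> 0"
  shows "psd_op I (\<lambda>i j. complex_of_real a * (\<Sum>x\<in>X. ketbra (u x) (u x) i j))"
  unfolding psd_op_def
proof
  fix v
  define z where "z x = vinner I v (u x)" for x
  have "(\<Sum>i\<in>I. \<Sum>j\<in>I. cnj (v i) * (complex_of_real a * (\<Sum>x\<in>X. ketbra (u x) (u x) i j)) * v j)
      = (\<Sum>i\<in>I. \<Sum>j\<in>I. \<Sum>x\<in>X. complex_of_real a * ((cnj (v i) * u x i) * (cnj (u x j) * v j)))"
    unfolding ketbra_def by (simp add: sum_distrib_left sum_distrib_right algebra_simps)
  also have "\<dots> = (\<Sum>x\<in>X. \<Sum>i\<in>I. \<Sum>j\<in>I. complex_of_real a * ((cnj (v i) * u x i) * (cnj (u x j) * v j)))"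
    by (simp add: sum.swap[where A=I and B=X])
  also have "\<dots> = (\<Sum>x\<in>X. complex_of_real a * (z x * cnj (z x)))"
    unfolding z_def vinner_def
    by (simp add: sum_product sum_distrib_left algebra_simps)
  also have "\<dots> = (\<Sum>x\<in>X. complex_of_real a * complex_of_real ((norm (z x))^2))"
    by (simp only: complex_norm_square)
  also have "\<dots> = complex_of_real (a * (\<Sum>x\<in>X. (norm (z x))^2))"
    by (simp only: of_real_mult of_real_sum sum_distrib_left)
  finally have eq: "(\<Sum>i\<in>I. \<Sum>j\<in>I. cnj (v i) * (complex_of_real a * (\<Sum>x\<in>X. ketbra (u x) (u x) i j)) * v j)
      = complex_of_real (a * (\<Sum>x\<in>X. (norm (z x))^2))" .
  show "Im (\<Sum>i\<in>I. \<Sum>j\<in>I. cnj (v i) * (complex_of_real a * (\<Sum>x\<in>X. ketbra (u x) (u x) i j)) * v j) = 0 \<and>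
        0 \<le> Re (\<Sum>i\<in>I. \<Sum>j\<in>I. cnj (v i) * (complex_of_real a * (\<Sum>x\<in>X. ketbra (u x) (u x) i j)) * v j)"
    unfolding eq using assms by (simp add: sum_nonneg)
qed

lemma sandwich:
  assumes herm: "hermitian_op I R" and i: "i \<in> I" and i': "i' \<in> I"
  shows "op_mult I (op_mult I R (\<lambda>l m. a * (\<Sum>x\<in>X. ketbra (u x) (u x) l m))) R i i'
       = a * (\<Sum>x\<in>X. ketbra (appl I R (u x)) (appl I R (u x)) i i')"
proof -
  have Rm: "m \<in> I \<Longrightarrow> R m i' = cnj (R i' m)" for m
    using herm i' unfolding hermitian_op_def by blast
  have "op_mult I (op_mult I R (\<lambda>l m. a * (\<Sum>x\<in>X. ketbra (u x) (u x) l m))) R i i'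
      = (\<Sum>m\<in>I. (\<Sum>l\<in>I. R i l * (a * (\<Sum>x\<in>X. ketbra (u x) (u x) l m))) * cnj (R i' m))"
    unfolding op_mult_def by (intro sum.cong) (simp_all add: Rm)
  also have "\<dots> = (\<Sum>m\<in>I. \<Sum>l\<in>I. \<Sum>x\<in>X. a * ((R i l * u x l) * (cnj (R i' m) * cnj (u x m))))"
    unfolding ketbra_def by (simp add: sum_distrib_left sum_distrib_right algebra_simps)
  also have "\<dots> = (\<Sum>x\<in>X. \<Sum>m\<in>I. \<Sum>l\<in>I. a * ((R i l * u x l) * (cnj (R i' m) * cnj (u x m))))"
    by (simp add: sum.swap[where A=I and B=X])
  also have "\<dots> = a * (\<Sum>x\<in>X. ketbra (appl I R (u x)) (appl I R (u x)) i i')"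
  proof -
    have "(\<Sum>m\<in>I. \<Sum>l\<in>I. a * ((R i l * u x l) * (cnj (R i' m) * cnj (u x m))))
        = a * ((\<Sum>l\<in>I. R i l * u x l) * (\<Sum>m\<in>I. cnj (R i' m) * cnj (u x m)))" for x
    proof -
      have "(\<Sum>l\<in>I. R i l * u x l) * (\<Sum>m\<in>I. cnj (R i' m) * cnj (u x m))
          = (\<Sum>l\<in>I. \<Sum>m\<in>I. (R i l * u x l) * (cnj (R i' m) * cnj (u x m)))"
        by (rule sum_product)
      also have "\<dots> = (\<Sum>m\<in>I. \<Sum>l\<in>I. (R i l * u x l) * (cnj (R i' m) * cnj (u x m)))"
        by (rule sum.swap)
      finally show ?thesis by (simp add: sum_distrib_left)
    qed
    then show ?thesis unfolding ketbra_def appl_def by (simp add: sum_distrib_left)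
  qed
  finally show ?thesis .
qed

lemma pinv_eigen:
  fixes n :: nat
  assumes orth: "\<forall>a<n. \<forall>b<n. vinner I (e a) (e b) = (if a = b then 1 else 0)"
    and pos: "\<forall>a<n. lam a > 0"
    and M: "\<forall>i\<in>I. \<forall>j\<in>I. M i j = (\<Sum>a<n. complex_of_real (lam a) * ketbra (e a) (e a) i j)"
    and R: "\<forall>i\<in>I. \<forall>j\<in>I. R i j = (\<Sum>a<n. complex_of_real (1 / sqrt (lam a)) * ketbra (e a) (e a) i j)"
    and eig: "\<forall>i\<in>I. appl I M g i = complex_of_real mu * g i"
    and mu: "mu > 0"
    and i: "i \<in> I"
  shows "appl I R g i = complex_of_real (1 / sqrt mu) * g i"
proof -
  define c where "c a = vinner I (e a) g" for a
  have gen: "(\<forall>i\<in>I. \<forall>j\<in>I. N i j = (\<Sum>a<n. complex_of_real (f a) * ketbra (e a) (e a) i j))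
     \<Longrightarrow> i \<in> I \<Longrightarrow> appl I N g i = (\<Sum>a<n. complex_of_real (f a) * e a i * c a)" for N f i
  proof -
    assume N: "\<forall>i\<in>I. \<forall>j\<in>I. N i j = (\<Sum>a<n. complex_of_real (f a) * ketbra (e a) (e a) i j)"
      and i: "i \<in> I"
    have "appl I N g i = (\<Sum>l\<in>I. (\<Sum>a<n. complex_of_real (f a) * ketbra (e a) (e a) i l) * g l)"
      unfolding appl_def using N i by (intro sum.cong) auto
    also have "\<dots> = (\<Sum>a<n. complex_of_real (f a) * e a i * c a)"
      unfolding c_def vinner_def ketbra_def
      by (simp add: sum_distrib_left sum_distrib_right algebra_simps sum.swap[where A=I and B="{..<n}"])
    finally show ?thesis .
  qed
  have Mg: "i \<in> I \<Longrightarrow> appl I M g i = (\<Sum>a<n. complex_of_real (lam a) * e a i * c a)" for i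
    using gen[OF M] .
  have Rg: "appl I R g i = (\<Sum>a<n. complex_of_real (1 / sqrt (lam a)) * e a i * c a)"
    using gen[OF R i] .
  have key: "c b = 0 \<or> lam b = mu" if b: "b < n" for b
  proof -
    have "vinner I (e b) (appl I M g) = vinner I (e b) (\<lambda>i. \<Sum>a<n. (complex_of_real (lam a) * c a) * e a i)"
      unfolding vinner_def using Mg by (intro sum.cong) (auto simp: algebra_simps)
    also have "\<dots> = (\<Sum>a<n. (complex_of_real (lam a) * c a) * vinner I (e b) (e a))"
      by (rule vinner_sum_right)
    also have "\<dots> = (\<Sum>a<n. if a = b then complex_of_real (lam a) * c a else 0)"
      using orth b by (intro sum.cong) auto
    also have "\<dots> = complex_of_real (lam b) * c b" using b by (simp add: sum.delta sum.delta')
    finally have 1: "vinner I (e b) (appl I M g) = complex_of_real (lam b) * c b" .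
    have "vinner I (e b) (appl I M g) = vinner I (e b) (\<lambda>i. complex_of_real mu * g i)"
      unfolding vinner_def using eig by (intro sum.cong) auto
    also have "\<dots> = complex_of_real mu * c b"
      unfolding vinner_def c_def by (simp add: sum_distrib_left algebra_simps)
    finally have "complex_of_real (lam b) * c b = complex_of_real mu * c b" using 1 by simp
    then show ?thesis by auto
  qed
  have t1: "complex_of_real (1 / sqrt (lam a)) * e a i * c a = complex_of_real (1 / sqrt mu) * (e a i * c a)"
    if "a < n" for a using key[OF that] by auto
  have t2: "complex_of_real (lam a) * e a i * c a = complex_of_real mu * (e a i * c a)"
    if "a < n" for a using key[OF that] by auto
  have "complex_of_real mu * g i = complex_of_real mu * (\<Sum>a<n. e a i * c a)"
    using eig i Mg[OF i] t2 by (simp add: sum_distrib_left)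
  then have gi: "g i = (\<Sum>a<n. e a i * c a)" using mu by simp
  have "appl I R g i = (\<Sum>a<n. complex_of_real (1 / sqrt mu) * (e a i * c a))"
    unfolding Rg using t1 by (intro sum.cong) auto
  then show ?thesis unfolding gi by (simp add: sum_distrib_left)
qed



lemma Zpk_eq: "Zpk p k = {xs. set xs \<subseteq> {..<p} \<and> length xs = k}"
  unfolding Zpk_def by auto

lemma finite_Zpk: "finite (Zpk p k)"
  unfolding Zpk_eq by (rule finite_lists_length_eq) simp

lemma card_Zpk: "card (Zpk p k) = p ^ k"
  unfolding Zpk_eq by (subst card_lists_length_eq) simp_all

lemma Ak_eq: "Ak k = {xs. set xs \<subseteq> (UNIV :: 'a::finite set) \<and> length xs = k}"
  unfolding Ak_def by auto

lemma finite_Ak: "finite (Ak k :: 'a::finite list set)"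
  unfolding Ak_eq by (rule finite_lists_length_eq) simp

lemma card_Ak: "card (Ak k :: 'a::finite list set) = CARD('a) ^ k"
  unfolding Ak_eq by (subst card_lists_length_eq) simp_all

lemma finite_index_set: "finite (index_set p k :: ('a::finite list \<times> nat list) set)"
  unfolding index_set_def using finite_Ak finite_Zpk by blast

lemma finite_Sset: "finite (Sset hPhi p k x w)"
  unfolding Sset_def using finite_Zpk by simp

lemma ketS_real: "cnj (ketS hPhi p k x w i) = ketS hPhi p k x w i"
  unfolding ketS_def by (cases i) auto

lemma ketS_zero: "eta hPhi p k x w = 0 \<Longrightarrow> ketS hPhi p k x w i = 0"
  unfolding ketS_def eta_def using finite_Sset by (cases i) auto

lemma ketS_zero': "\<not> 0 < eta hPhi p k x w \<Longrightarrow> ketS hPhi p k x w i = 0"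
  using ketS_zero by blast

lemma sum_eta: "(\<Sum>w\<in>UNIV. eta hPhi p k x (w::'a::{finite,ab_group_add})) = p ^ k"
proof -
  have "(\<Sum>w\<in>UNIV. eta hPhi p k x w) = (\<Sum>w\<in>UNIV. \<Sum>b\<in>{b\<in>Zpk p k. hatPhi_vec hPhi k x b = w}. 1)"
    unfolding eta_def Sset_def by simp
  also have "\<dots> = (\<Sum>b\<in>Zpk p k. 1)"
    by (rule sum.group) (simp_all add: finite_Zpk)
  finally show ?thesis by (simp add: card_Zpk)
qed

lemma ketS_apply: "ketS hPhi p k x w (z, b) = (if z = x \<and> b \<in> Sset hPhi p k x w
       then complex_of_real (1 / sqrt (real (eta hPhi p k x w))) else 0)"
  unfolding ketS_def by simp

lemma vinner_ketS:
  fixes hPhi :: "nat \<Rightarrow> 'a::{finite,ab_group_add} \<Rightarrow> 'a"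
  assumes x: "x \<in> Ak k"
  shows "vinner (index_set p k) (ketS hPhi p k x w) (ketS hPhi p k y v)
     = (if x = y \<and> w = v \<and> 0 < eta hPhi p k x w then 1 else 0)"
proof -
  let ?I = "index_set p k" and ?S = "Sset hPhi p k x w" and ?e = "eta hPhi p k x w"
  have tm: "cnj (ketS hPhi p k x w i) * ketS hPhi p k y v i
     = (if i \<in> {x} \<times> ?S \<and> x = y \<and> w = v then complex_of_real (1 / real ?e) else 0)" for i
  proof (cases i)
    case (Pair z b)
    show ?thesis
    proof (cases "z = x \<and> b \<in> ?S \<and> z = y \<and> b \<in> Sset hPhi p k y v")
      case True
      then have wv: "w = v" unfolding Sset_def by auto
      have k1: "ketS hPhi p k x w i = complex_of_real (1 / sqrt (real ?e))"
        using True Pair by (simp add: ketS_def)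
      have k2: "ketS hPhi p k y v i = complex_of_real (1 / sqrt (real ?e))"
      proof -
        have "y = x" "v = w" using True wv by blast+
        then show ?thesis using True Pair by (simp add: ketS_def)
      qed
      have sq: "(1 / sqrt r) * (1 / sqrt r) = 1 / r" if "r \<ge> 0" for r :: real
        using that by (metis mult_1 real_sqrt_mult_self abs_of_nonneg times_divide_times_eq)
      have calc: "cnj (ketS hPhi p k x w i) * ketS hPhi p k y v i = complex_of_real (1 / real ?e)"
        unfolding k1 k2 complex_cnj_complex_of_real of_real_mult[symmetric] sq[OF of_nat_0_le_iff] ..
      have cond: "i \<in> {x} \<times> ?S \<and> x = y \<and> w = v" using True Pair wv by blast
      show ?thesis by (simp only: if_P[OF cond] calc)
    next
      case False
      have z: "ketS hPhi p k x w i = 0 \<or> ketS hPhi p k y v i = 0"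
        using False unfolding Pair by (auto simp add: ketS_apply)
      have ncond: "\<not> (i \<in> {x} \<times> ?S \<and> x = y \<and> w = v)" using False Pair by blast
      show ?thesis unfolding if_not_P[OF ncond] using z by auto
    qed
  qed
  have sub: "{x} \<times> ?S \<subseteq> ?I" using x unfolding index_set_def Sset_def by auto
  have "vinner ?I (ketS hPhi p k x w) (ketS hPhi p k y v)
      = (\<Sum>i\<in>?I. if i \<in> {x} \<times> ?S \<and> x = y \<and> w = v then complex_of_real (1 / real ?e) else 0)"
    unfolding vinner_def using tm by simp
  also have "\<dots> = (if x = y \<and> w = v then (\<Sum>i\<in>?I \<inter> ({x} \<times> ?S). complex_of_real (1 / real ?e)) else 0)"
  proof (cases "x = y \<and> w = v")
    case True
    then show ?thesis
      using sum.inter_restrict[OF finite_index_set, of "\<lambda>_. complex_of_real (1 / real ?e)" p k "{x} \<times> ?S"]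
      by simp
  next
    case False
    show ?thesis unfolding if_not_P[OF False] by (rule sum.neutral) (use False in auto)
  qed
  also have "?I \<inter> ({x} \<times> ?S) = {x} \<times> ?S" using sub by blast
  finally have vi: "vinner ?I (ketS hPhi p k x w) (ketS hPhi p k y v) = (if x = y \<and> w = v then (\<Sum>i\<in>{x} \<times> ?S. complex_of_real (1 / real ?e)) else 0)" .
  have "card ({x} \<times> ?S) = ?e" unfolding eta_def by (simp add: card_cartesian_product)
  then show ?thesis
  proof (cases "x = y \<and> w = v")
    case True
    then have "(if x = y \<and> w = v then (\<Sum>i\<in>{x} \<times> ?S. complex_of_real (1 / real ?e)) else 0)
       = of_nat (card ({x} \<times> ?S)) * complex_of_real (1 / real ?e)" by simp
    moreover have "(if x = y \<and> w = v \<and> 0 < ?e then 1 else 0) = (if 0 < ?e then (1::complex) else 0)"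
      using True by simp
    ultimately show ?thesis using \<open>card ({x} \<times> ?S) = ?e\<close> vi by simp
  qed (use vi in auto)
qed



definition psiv :: "('a::{ab_group_add,finite} \<Rightarrow> 'a \<Rightarrow> complex) \<Rightarrow> (nat \<Rightarrow> 'a \<Rightarrow> 'a) \<Rightarrow> nat \<Rightarrow> nat \<Rightarrow> 'a \<Rightarrow> 'a list
   \<Rightarrow> ('a list \<times> nat list) \<Rightarrow> complex" where
  "psiv chi hPhi p k d x = (\<lambda>i. \<Sum>w\<in>UNIV. (chi w d * complex_of_real (sqrt (real (eta hPhi p k x w)))) * ketS hPhi p k x w i)"

definition phiv :: "('a::{ab_group_add,finite} \<Rightarrow> 'a \<Rightarrow> complex) \<Rightarrow> (nat \<Rightarrow> 'a \<Rightarrow> 'a) \<Rightarrow> nat \<Rightarrow> nat \<Rightarrow> 'a \<Rightarrow> 'a list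
   \<Rightarrow> ('a list \<times> nat list) \<Rightarrow> complex" where
  "phiv chi hPhi p k d x = (\<lambda>i. \<Sum>w\<in>UNIV. chi w d * ketS hPhi p k x w i)"

lemma vinner_comb:
  fixes hPhi :: "nat \<Rightarrow> 'a::{finite,ab_group_add} \<Rightarrow> 'a"
  assumes x: "x \<in> Ak k"
  shows "vinner (index_set p k) (\<lambda>i. \<Sum>w\<in>UNIV. a w * ketS hPhi p k x w i) (\<lambda>i. \<Sum>v\<in>UNIV. b v * ketS hPhi p k y v i)
    = (if x = y then (\<Sum>w\<in>UNIV. if 0 < eta hPhi p k x w then cnj (a w) * b w else 0) else 0)"
proof -
  have "vinner (index_set p k) (\<lambda>i. \<Sum>w\<in>UNIV. a w * ketS hPhi p k x w i) (\<lambda>i. \<Sum>v\<in>UNIV. b v * ketS hPhi p k y v i)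
     = (\<Sum>w\<in>UNIV. cnj (a w) * (\<Sum>v\<in>UNIV. b v * vinner (index_set p k) (ketS hPhi p k x w) (ketS hPhi p k y v)))"
    by (simp add: vinner_sum_left vinner_sum_right)
  also have "\<dots> = (\<Sum>w\<in>UNIV. cnj (a w) * (\<Sum>v\<in>UNIV. if v = w then (if x = y \<and> 0 < eta hPhi p k x w then b w else 0) else 0))"
    using x by (intro sum.cong refl arg_cong2[where f="(*)"]) (auto simp: vinner_ketS)
  also have "\<dots> = (if x = y then (\<Sum>w\<in>UNIV. if 0 < eta hPhi p k x w then cnj (a w) * b w else 0) else 0)"
    by (auto intro: sum.cong)
  finally show ?thesis .
qed

locale setting = chars chi for chi :: "'a::{ab_group_add,finite} \<Rightarrow> 'a \<Rightarrow> complex" +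
  fixes hPhi :: "nat \<Rightarrow> 'a \<Rightarrow> 'a" and p k :: nat
  assumes p_pos: "p > 0"
begin


lemma chi_abs2': "cnj (chi x y) * chi x y = 1" using chi_abs2[of x y] by (simp add: mult.commute)

lemma NN_pos: "(p * CARD('a)) ^ k > 0" using p_pos by simp

lemma sqrt_eta_mult: "complex_of_real (sqrt (real (eta hPhi p k x w * eta hPhi p k x v)))
   = complex_of_real (sqrt (real (eta hPhi p k x w))) * complex_of_real (sqrt (real (eta hPhi p k x v)))"
  by (simp add: real_sqrt_mult)

lemma sigma_form: "sigma chi hPhi p k d = (\<lambda>i j. complex_of_real (1 / real ((p * CARD('a)) ^ k)) *
    (\<Sum>x\<in>Ak k. ketbra (psiv chi hPhi p k d x) (psiv chi hPhi p k d x) i j))"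
proof (intro ext)
  fix i j
  have "(\<Sum>w\<in>UNIV. \<Sum>v\<in>UNIV. chi w d * cnj (chi v d) *
        complex_of_real (sqrt (real (eta hPhi p k x w * eta hPhi p k x v))) *
        ketbra (ketS hPhi p k x w) (ketS hPhi p k x v) i j)
     = ketbra (psiv chi hPhi p k d x) (psiv chi hPhi p k d x) i j" for x
    unfolding psiv_def ketbra_sum[symmetric] sqrt_eta_mult
    by (simp add: algebra_simps)
  then show "sigma chi hPhi p k d i j = complex_of_real (1 / real ((p * CARD('a)) ^ k)) *
    (\<Sum>x\<in>Ak k. ketbra (psiv chi hPhi p k d x) (psiv chi hPhi p k d x) i j)"
    unfolding sigma_def by (simp add: of_real_divide)
qed

lemma Eop_form: "Eop chi hPhi p k d = (\<lambda>i j. complex_of_real (1 / real CARD('a)) *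
    (\<Sum>x\<in>Ak k. ketbra (phiv chi hPhi p k d x) (phiv chi hPhi p k d x) i j))"
proof (intro ext)
  fix i j
  have "(\<Sum>w\<in>UNIV. \<Sum>v\<in>UNIV. chi w d * cnj (chi v d) *
        ketbra (ketS hPhi p k x w) (ketS hPhi p k x v) i j)
     = ketbra (phiv chi hPhi p k d x) (phiv chi hPhi p k d x) i j" for x
    unfolding phiv_def ketbra_sum[symmetric] by simp
  then show "Eop chi hPhi p k d i j = complex_of_real (1 / real CARD('a)) *
    (\<Sum>x\<in>Ak k. ketbra (phiv chi hPhi p k d x) (phiv chi hPhi p k d x) i j)"
    unfolding Eop_def by (simp add: of_real_divide)
qed

lemma Sigma_form: "SigmaOp chi hPhi p k =
       (\<lambda>i j. (of_nat CARD('a) / of_nat ((p * CARD('a)) ^ k)) *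
          (\<Sum>x\<in>Ak k. \<Sum>w\<in>UNIV. of_nat (eta hPhi p k x w) *
             ketbra (ketS hPhi p k x w) (ketS hPhi p k x w) i j))"
proof (intro ext)
  fix i j
  let ?kb = "\<lambda>x w v. ketbra (ketS hPhi p k x w) (ketS hPhi p k x v) i j"
  let ?s = "\<lambda>x w v. complex_of_real (sqrt (real (eta hPhi p k x w * eta hPhi p k x v)))"
  have "SigmaOp chi hPhi p k i j = (\<Sum>d\<in>UNIV. (1 / of_nat ((p * CARD('a)) ^ k)) *
     (\<Sum>x\<in>Ak k. \<Sum>w\<in>UNIV. \<Sum>v\<in>UNIV. chi w d * cnj (chi v d) * ?s x w v * ?kb x w v))"
    unfolding SigmaOp_def sigma_def by simp
  also have "\<dots> = (1 / of_nat ((p * CARD('a)) ^ k)) *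
     (\<Sum>d\<in>UNIV. \<Sum>x\<in>Ak k. \<Sum>w\<in>UNIV. \<Sum>v\<in>UNIV. chi w d * cnj (chi v d) * ?s x w v * ?kb x w v)"
    by (simp add: sum_distrib_left)
  also have "(\<Sum>d\<in>UNIV. \<Sum>x\<in>Ak k. \<Sum>w\<in>UNIV. \<Sum>v\<in>UNIV. chi w d * cnj (chi v d) * ?s x w v * ?kb x w v)
     = (\<Sum>x\<in>Ak k. \<Sum>w\<in>UNIV. \<Sum>v\<in>UNIV. (if w = v then of_nat CARD('a) * (?s x w v * ?kb x w v) else 0))"
  proof -
    have "(\<Sum>d\<in>UNIV. \<Sum>x\<in>Ak k. \<Sum>w\<in>UNIV. \<Sum>v\<in>UNIV. chi w d * cnj (chi v d) * ?s x w v * ?kb x w v)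
     = (\<Sum>x\<in>Ak k. \<Sum>d\<in>UNIV. \<Sum>w\<in>UNIV. \<Sum>v\<in>UNIV. chi w d * cnj (chi v d) * ?s x w v * ?kb x w v)"
      by (rule sum.swap)
    also have "\<dots> = (\<Sum>x\<in>Ak k. \<Sum>w\<in>UNIV. \<Sum>d\<in>UNIV. \<Sum>v\<in>UNIV. chi w d * cnj (chi v d) * ?s x w v * ?kb x w v)"
      by (rule sum.cong[OF refl], rule sum.swap)
    also have "\<dots> = (\<Sum>x\<in>Ak k. \<Sum>w\<in>UNIV. \<Sum>v\<in>UNIV. \<Sum>d\<in>UNIV. chi w d * cnj (chi v d) * ?s x w v * ?kb x w v)"
      by (rule sum.cong[OF refl], rule sum.cong[OF refl], rule sum.swap)
    also have "\<dots> = (\<Sum>x\<in>Ak k. \<Sum>w\<in>UNIV. \<Sum>v\<in>UNIV. (\<Sum>d\<in>UNIV. chi w d * cnj (chi v d)) * (?s x w v * ?kb x w v))"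
      by (simp add: sum_distrib_right mult.assoc)
    also have "\<dots> = (\<Sum>x\<in>Ak k. \<Sum>w\<in>UNIV. \<Sum>v\<in>UNIV. (if w = v then of_nat CARD('a) * (?s x w v * ?kb x w v) else 0))"
      by (simp only: chi_orth if_distrib[of "\<lambda>z. z * _"] mult_zero_left)
    finally show ?thesis .
  qed
  also have "(1 / of_nat ((p * CARD('a)) ^ k)) * (\<Sum>x\<in>Ak k. \<Sum>w\<in>UNIV. \<Sum>v\<in>UNIV. (if w = v then of_nat CARD('a) * (?s x w v * ?kb x w v) else 0))
     = (of_nat CARD('a) / of_nat ((p * CARD('a)) ^ k)) *
          (\<Sum>x\<in>Ak k. \<Sum>w\<in>UNIV. of_nat (eta hPhi p k x w) * ?kb x w w)"
    by (simp add: sum_distrib_left)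
  finally show "SigmaOp chi hPhi p k i j = (of_nat CARD('a) / of_nat ((p * CARD('a)) ^ k)) *
          (\<Sum>x\<in>Ak k. \<Sum>w\<in>UNIV. of_nat (eta hPhi p k x w) * ?kb x w w)" .
qed


lemma vin_general:
  assumes x: "x \<in> Ak k" and y: "y \<in> Ak k"
  shows "vinner (index_set p k) (\<lambda>i. \<Sum>w\<in>UNIV. a w * ketS hPhi p k x w i) (\<lambda>i. \<Sum>v\<in>UNIV. b v * ketS hPhi p k y v i)
    = (if x = y then (\<Sum>w\<in>UNIV. if 0 < eta hPhi p k x w then cnj (a w) * b w else 0) else 0)"
  by (rule vinner_comb[OF x])

lemma cs_sq: "cnj (complex_of_real (sqrt (real n))) * complex_of_real (sqrt (real n)) = of_nat n"
  by (simp flip: of_real_mult)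

lemma vin_psi_psi:
  assumes x: "x \<in> Ak k"
  shows "vinner (index_set p k) (psiv chi hPhi p k d x) (psiv chi hPhi p k d x) = of_nat (p ^ k)"
proof -
  have "vinner (index_set p k) (psiv chi hPhi p k d x) (psiv chi hPhi p k d x)
     = (\<Sum>w\<in>UNIV. if 0 < eta hPhi p k x w then cnj (chi w d * complex_of_real (sqrt (real (eta hPhi p k x w))))
            * (chi w d * complex_of_real (sqrt (real (eta hPhi p k x w)))) else 0)"
    unfolding psiv_def by (simp add: vinner_comb[OF x])
  also have "\<dots> = (\<Sum>w\<in>UNIV. of_nat (eta hPhi p k x w))"
  proof (rule sum.cong[OF refl])
    fix w
    have "cnj (chi w d * complex_of_real (sqrt (real (eta hPhi p k x w))))
            * (chi w d * complex_of_real (sqrt (real (eta hPhi p k x w))))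
        = (chi w d * cnj (chi w d)) * (cnj (complex_of_real (sqrt (real (eta hPhi p k x w)))) * complex_of_real (sqrt (real (eta hPhi p k x w))))"
      by (simp only: complex_cnj_mult ac_simps)
    also have "\<dots> = of_nat (eta hPhi p k x w)" by (simp only: chi_abs2 cs_sq mult_1)
    finally show "(if 0 < eta hPhi p k x w then cnj (chi w d * complex_of_real (sqrt (real (eta hPhi p k x w))))
            * (chi w d * complex_of_real (sqrt (real (eta hPhi p k x w)))) else 0) = of_nat (eta hPhi p k x w)"
      by simp
  qed
  also have "\<dots> = of_nat (p ^ k)" by (simp only: of_nat_sum[symmetric] sum_eta)
  finally show ?thesis .
qed

lemma vin_phi_psi:
  assumes x: "x \<in> Ak k" and y: "y \<in> Ak k"
  shows "vinner (index_set p k) (phiv chi hPhi p k d x) (psiv chi hPhi p k d y)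
     = (if x = y then (\<Sum>w\<in>UNIV. complex_of_real (sqrt (real (eta hPhi p k x w)))) else 0)"
proof -
  have "vinner (index_set p k) (phiv chi hPhi p k d x) (psiv chi hPhi p k d y)
     = (if x = y then (\<Sum>w\<in>UNIV. if 0 < eta hPhi p k x w then cnj (chi w d)
            * (chi w d * complex_of_real (sqrt (real (eta hPhi p k x w)))) else 0) else 0)"
    unfolding psiv_def phiv_def
    using vinner_comb[OF x, of p "\<lambda>w. chi w d" hPhi "\<lambda>w. chi w d * complex_of_real (sqrt (real (eta hPhi p k y w)))" y]
    by (cases "x = y") auto
  also have "(\<Sum>w\<in>UNIV. if 0 < eta hPhi p k x w then cnj (chi w d)
            * (chi w d * complex_of_real (sqrt (real (eta hPhi p k x w)))) else 0)
        = (\<Sum>w\<in>UNIV. complex_of_real (sqrt (real (eta hPhi p k x w))))"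
  proof (rule sum.cong[OF refl])
    fix w
    have "cnj (chi w d) * (chi w d * complex_of_real (sqrt (real (eta hPhi p k x w))))
       = (chi w d * cnj (chi w d)) * complex_of_real (sqrt (real (eta hPhi p k x w)))"
      by (simp only: ac_simps)
    then show "(if 0 < eta hPhi p k x w then cnj (chi w d)
            * (chi w d * complex_of_real (sqrt (real (eta hPhi p k x w)))) else 0)
         = complex_of_real (sqrt (real (eta hPhi p k x w)))"
      by (simp add: chi_abs2 chi_abs2')
  qed
  finally show ?thesis .
qed

lemma vin_psi_phi:
  assumes x: "x \<in> Ak k" and y: "y \<in> Ak k"
  shows "vinner (index_set p k) (psiv chi hPhi p k d y) (phiv chi hPhi p k d x)
     = (if x = y then (\<Sum>w\<in>UNIV. complex_of_real (sqrt (real (eta hPhi p k x w)))) else 0)"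
proof -
  have "vinner (index_set p k) (psiv chi hPhi p k d y) (phiv chi hPhi p k d x)
      = cnj (vinner (index_set p k) (phiv chi hPhi p k d x) (psiv chi hPhi p k d y))"
    unfolding vinner_def by (simp add: mult.commute)
  then show ?thesis unfolding vin_phi_psi[OF x y] by simp
qed

lemma density: "density_op (index_set p k) (sigma chi hPhi p k d)"
proof -
  have "op_trace (index_set p k) (sigma chi hPhi p k d) = complex_of_real (1 / real ((p * CARD('a)) ^ k)) *
     (\<Sum>x\<in>Ak k. vinner (index_set p k) (psiv chi hPhi p k d x) (psiv chi hPhi p k d x))"
    unfolding sigma_form by (rule trace_ketsum)
  also have "\<dots> = complex_of_real (1 / real ((p * CARD('a)) ^ k)) * (of_nat (card (Ak k :: 'a list set)) * of_nat (p ^ k))"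
    by (simp add: vin_psi_psi)
  also have "\<dots> = 1" using p_pos by (simp add: card_Ak power_mult_distrib)
  finally have tr: "op_trace (index_set p k) (sigma chi hPhi p k d) = 1" .
  have h: "hermitian_op (index_set p k) (sigma chi hPhi p k d)"
    unfolding sigma_form by (rule herm_ketsum)
  have ps: "psd_op (index_set p k) (sigma chi hPhi p k d)"
    unfolding sigma_form by (rule psd_ketsum) simp
  show ?thesis unfolding density_op_def using h ps tr by blast
qed

lemma trace_E_sigma: "op_trace (index_set p k) (op_mult (index_set p k) (Eop chi hPhi p k d) (sigma chi hPhi p k d))
           = of_nat p / of_nat ((p * CARD('a)) ^ (k + 1)) *
             (\<Sum>x\<in>Ak k. (\<Sum>w\<in>UNIV. complex_of_real (sqrt (real (eta hPhi p k x w)))) ^ 2)"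
proof -
  let ?Q = "\<lambda>x. (\<Sum>w\<in>UNIV. complex_of_real (sqrt (real (eta hPhi p k x w))))"
  have "op_trace (index_set p k) (op_mult (index_set p k) (Eop chi hPhi p k d) (sigma chi hPhi p k d))
     = complex_of_real (1 / real CARD('a)) * complex_of_real (1 / real ((p * CARD('a)) ^ k)) *
       (\<Sum>x\<in>Ak k. \<Sum>y\<in>Ak k. vinner (index_set p k) (phiv chi hPhi p k d x) (psiv chi hPhi p k d y)
             * vinner (index_set p k) (psiv chi hPhi p k d y) (phiv chi hPhi p k d x))"
    unfolding sigma_form Eop_form by (rule trace_prod)
  also have "(\<Sum>x\<in>Ak k. \<Sum>y\<in>Ak k. vinner (index_set p k) (phiv chi hPhi p k d x) (psiv chi hPhi p k d y)
             * vinner (index_set p k) (psiv chi hPhi p k d y) (phiv chi hPhi p k d x))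
     = (\<Sum>x\<in>Ak k. \<Sum>y\<in>Ak k. if x = y then ?Q x ^ 2 else 0)"
    by (intro sum.cong refl) (simp add: vin_phi_psi vin_psi_phi power2_eq_square)
  also have "\<dots> = (\<Sum>x\<in>Ak k. ?Q x ^ 2)"
    by (intro sum.cong refl) (simp add: sum.delta[OF finite_Ak] sum.delta'[OF finite_Ak])
  also have "complex_of_real (1 / real CARD('a)) * complex_of_real (1 / real ((p * CARD('a)) ^ k))
      = of_nat p / of_nat ((p * CARD('a)) ^ (k + 1))"
    using p_pos by (simp add: field_simps)
  finally show ?thesis .
qed

end


lemma ketS_nz: "ketS hPhi p k x w i \<noteq> 0 \<Longrightarrow> 0 < eta hPhi p k x w"
  using ketS_zero' by blast

lemma appl_sum:
  "appl I R (\<lambda>i. \<Sum>t\<in>T. c t * v t i) i = (\<Sum>t\<in>T. c t * appl I R (v t) i)"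
  unfolding appl_def by (simp add: sum_distrib_left algebra_simps sum.swap[where A=I])

lemma double_delta:
  assumes "finite A" "finite B" "x \<in> A" "w \<in> B"
  shows "(\<Sum>y\<in>A. \<Sum>v\<in>B. if y = x \<and> v = w then c else 0) = c"
proof -
  have "(\<Sum>v\<in>B. if y = x \<and> v = w then c else 0) = (if y = x then c else 0)" for y
    using assms by (cases "y = x") simp_all
  then show ?thesis using assms by simp
qed

lemma pinv_herm:
  assumes R: "\<forall>i\<in>I. \<forall>j\<in>I. R i j = (\<Sum>a<n. complex_of_real (f a) * ketbra (e a) (e a) i j)"
  shows "hermitian_op I R"
  unfolding hermitian_op_def
proof (intro ballI)
  fix i j assume i: "i \<in> I" and j: "j \<in> I"
  show "R j i = cnj (R i j)"
    using R i j unfolding ketbra_def by (simp add: mult.commute mult.left_commute)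
qed

context setting
begin

definition mu :: "'a list \<Rightarrow> 'a \<Rightarrow> real" where
  "mu x w = real CARD('a) * real (eta hPhi p k x w) / real ((p * CARD('a)) ^ k)"

lemma mu_pos: "0 < eta hPhi p k x w \<Longrightarrow> mu x w > 0"
  unfolding mu_def using p_pos by simp

lemma Sigma_ket: "SigmaOp chi hPhi p k i j = (\<Sum>y\<in>Ak k. \<Sum>v\<in>UNIV. complex_of_real (mu y v) *
    ketbra (ketS hPhi p k y v) (ketS hPhi p k y v) i j)"
  unfolding Sigma_form mu_def by (simp add: sum_distrib_left mult.assoc)

lemma Sigma_eig:
  assumes x: "x \<in> Ak k"
  shows "appl (index_set p k) (SigmaOp chi hPhi p k) (ketS hPhi p k x w) i
     = complex_of_real (mu x w) * ketS hPhi p k x w i"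
proof -
  let ?I = "index_set p k"
  have "appl ?I (SigmaOp chi hPhi p k) (ketS hPhi p k x w) i
     = (\<Sum>y\<in>Ak k. \<Sum>v\<in>UNIV. complex_of_real (mu y v) * ketS hPhi p k y v i *
           vinner ?I (ketS hPhi p k y v) (ketS hPhi p k x w))"
    unfolding appl_def Sigma_ket ketbra_def vinner_def
    by (simp add: sum_distrib_left sum_distrib_right algebra_simps
        sum.swap[where A="?I" and B="Ak k"] sum.swap[where A="?I" and B="UNIV :: 'a set"])
  also have "\<dots> = (\<Sum>y\<in>Ak k. \<Sum>v\<in>UNIV. if y = x \<and> v = w then (if 0 < eta hPhi p k x w
        then complex_of_real (mu x w) * ketS hPhi p k x w i else 0) else 0)"
    by (intro sum.cong refl) (auto simp: vinner_ketS)
  also have "\<dots> = (if 0 < eta hPhi p k x w then complex_of_real (mu x w) * ketS hPhi p k x w i else 0)"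
    by (rule double_delta[OF finite_Ak finite_class.finite_UNIV x UNIV_I])
  also have "\<dots> = complex_of_real (mu x w) * ketS hPhi p k x w i"
    using ketS_zero'[of hPhi p k x w i] by auto
  finally show ?thesis .
qed


lemma sqrt_ratio:
  assumes "0 < eta hPhi p k x w"
  shows "sqrt (real (eta hPhi p k x w)) * (1 / sqrt (mu x w))
     = sqrt (real ((p * CARD('a)) ^ k) / real CARD('a))"
proof -
  let ?e = "real (eta hPhi p k x w)" and ?N = "real ((p * CARD('a)) ^ k)" and ?C = "real CARD('a)"
  have pos: "?e > 0" "?N > 0" "?C > 0" using assms p_pos by auto
  have "sqrt (mu x w) = sqrt ?C * sqrt ?e / sqrt ?N"
    unfolding mu_def by (simp add: real_sqrt_mult real_sqrt_divide)
  then show ?thesis using pos by (simp add: real_sqrt_divide field_simps)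
qed

lemma R_sandwich:
  assumes R: "is_pinv_sqrt (index_set p k) (SigmaOp chi hPhi p k) R"
    and i: "i \<in> index_set p k" and i': "i' \<in> index_set p k"
  shows "op_mult (index_set p k) (op_mult (index_set p k) R (sigma chi hPhi p k j)) R i i'
       = Eop chi hPhi p k j i i'"
proof -
  let ?I = "index_set p k"
  obtain n :: nat and e :: "nat \<Rightarrow> _" and lam :: "nat \<Rightarrow> real" where orth: "\<forall>a<n. \<forall>b<n. vinner ?I (e a) (e b) = (if a = b then 1 else 0)"
    and pos: "\<forall>a<n. lam a > 0"
    and M: "\<forall>i\<in>?I. \<forall>j\<in>?I. SigmaOp chi hPhi p k i j = (\<Sum>a<n. complex_of_real (lam a) * ketbra (e a) (e a) i j)"
    and RR: "\<forall>i\<in>?I. \<forall>j\<in>?I. R i j = (\<Sum>a<n. complex_of_real (1 / sqrt (lam a)) * ketbra (e a) (e a) i j)"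
    using R unfolding is_pinv_sqrt_def by blast
  have herm: "hermitian_op ?I R" by (rule pinv_herm[OF RR])
  have RK: "appl ?I R (ketS hPhi p k x w) i = complex_of_real (1 / sqrt (mu x w)) * ketS hPhi p k x w i"
    if x: "x \<in> Ak k" and i: "i \<in> ?I" for x w i
  proof (cases "0 < eta hPhi p k x w")
    case True
    show ?thesis
      by (rule pinv_eigen[OF orth pos M RR _ mu_pos[OF True] i]) (simp add: Sigma_eig[OF x])
  next
    case False
    then have z: "ketS hPhi p k x w = (\<lambda>_. 0)" using ketS_zero' by blast
    show ?thesis unfolding appl_def z by simp
  qed
  define c where "c = sqrt (real ((p * CARD('a)) ^ k) / real CARD('a))"
  have Rpsi: "appl ?I R (psiv chi hPhi p k j x) i = complex_of_real c * phiv chi hPhi p k j x i"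
    if x: "x \<in> Ak k" and i: "i \<in> ?I" for x i
  proof -
    have "appl ?I R (psiv chi hPhi p k j x) i
       = (\<Sum>w\<in>UNIV. (chi w j * complex_of_real (sqrt (real (eta hPhi p k x w)))) * appl ?I R (ketS hPhi p k x w) i)"
      unfolding psiv_def by (rule appl_sum)
    also have "\<dots> = (\<Sum>w\<in>UNIV. complex_of_real c * (chi w j * ketS hPhi p k x w i))"
    proof (rule sum.cong[OF refl])
      fix w
      show "(chi w j * complex_of_real (sqrt (real (eta hPhi p k x w)))) * appl ?I R (ketS hPhi p k x w) i
          = complex_of_real c * (chi w j * ketS hPhi p k x w i)"
      proof (cases "0 < eta hPhi p k x w")
        case True
        have "(chi w j * complex_of_real (sqrt (real (eta hPhi p k x w)))) * appl ?I R (ketS hPhi p k x w) i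
           = chi w j * complex_of_real (sqrt (real (eta hPhi p k x w)) * (1 / sqrt (mu x w))) * ketS hPhi p k x w i"
          unfolding RK[OF x i] by (simp only: of_real_mult mult.assoc)
        also have "\<dots> = complex_of_real c * (chi w j * ketS hPhi p k x w i)"
          unfolding sqrt_ratio[OF True] c_def by (simp only: ac_simps)
        finally show ?thesis .
      next
        case False
        then have "ketS hPhi p k x w i = 0" using ketS_zero' by blast
        then show ?thesis using RK[OF x i] by simp
      qed
    qed
    also have "\<dots> = complex_of_real c * phiv chi hPhi p k j x i"
      unfolding phiv_def by (simp add: sum_distrib_left)
    finally show ?thesis .
  qed
  have "op_mult ?I (op_mult ?I R (sigma chi hPhi p k j)) R i i'
      = complex_of_real (1 / real ((p * CARD('a)) ^ k)) *
        (\<Sum>x\<in>Ak k. ketbra (appl ?I R (psiv chi hPhi p k j x)) (appl ?I R (psiv chi hPhi p k j x)) i i')"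
    unfolding sigma_form by (rule sandwich[OF herm i i'])
  also have "\<dots> = complex_of_real (1 / real ((p * CARD('a)) ^ k)) *
        (\<Sum>x\<in>Ak k. complex_of_real (c * c) * ketbra (phiv chi hPhi p k j x) (phiv chi hPhi p k j x) i i')"
  proof (rule arg_cong[where f="\<lambda>z. _ * z"], rule sum.cong[OF refl])
    fix x :: "'a list" assume x: "x \<in> Ak k"
    show "ketbra (appl ?I R (psiv chi hPhi p k j x)) (appl ?I R (psiv chi hPhi p k j x)) i i'
       = complex_of_real (c * c) * ketbra (phiv chi hPhi p k j x) (phiv chi hPhi p k j x) i i'"
      unfolding ketbra_def Rpsi[OF x i] Rpsi[OF x i'] by (simp add: algebra_simps)
  qed
  also have "\<dots> = complex_of_real (1 / real CARD('a)) *
        (\<Sum>x\<in>Ak k. ketbra (phiv chi hPhi p k j x) (phiv chi hPhi p k j x) i i')"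
  proof -
    have "c * c = real ((p * CARD('a)) ^ k) / real CARD('a)" unfolding c_def by simp
    then have "(1 / real ((p * CARD('a)) ^ k)) * (c * c) = 1 / real CARD('a)" using p_pos by simp
    then have h: "complex_of_real (1 / real ((p * CARD('a)) ^ k)) * complex_of_real (c * c) = complex_of_real (1 / real CARD('a))"
      by (simp only: of_real_mult[symmetric])
    show ?thesis by (simp only: sum_distrib_left mult.assoc[symmetric] h)
  qed
  also have "\<dots> = Eop chi hPhi p k j i i'" unfolding Eop_form ..
  finally show ?thesis .
qed

lemma R_exists: "\<exists>R. is_pinv_sqrt (index_set p k) (SigmaOp chi hPhi p k) R"
proof -
  let ?I = "index_set p k"
  let ?P = "{(x, w). x \<in> Ak k \<and> 0 < eta hPhi p k x w}"
  have finP: "finite ?P"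
    by (rule finite_subset[of _ "Ak k \<times> UNIV"]) (auto simp: finite_Ak)
  obtain xs where xs: "set xs = ?P" "distinct xs" using finite_distinct_list[OF finP] by blast
  define n where "n = length xs"
  define e where "e a = ketS hPhi p k (fst (xs ! a)) (snd (xs ! a))" for a
  define lam where "lam a = mu (fst (xs ! a)) (snd (xs ! a))" for a
  have inP: "a < n \<Longrightarrow> xs ! a \<in> ?P" for a
  proof -
    assume "a < n"
    then have "xs ! a \<in> set xs" unfolding n_def by (rule nth_mem)
    then show ?thesis unfolding xs(1) .
  qed
  have orth: "\<forall>a<n. \<forall>b<n. vinner ?I (e a) (e b) = (if a = b then 1 else 0)"
  proof (intro allI impI)
    fix a b assume a: "a < n" and b: "b < n"
    have 1: "fst (xs ! a) \<in> Ak k" "0 < eta hPhi p k (fst (xs ! a)) (snd (xs ! a))"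
      using inP[OF a] by (simp_all add: case_prod_beta)
    have "(fst (xs ! a) = fst (xs ! b) \<and> snd (xs ! a) = snd (xs ! b)) = (xs ! a = xs ! b)"
      by (simp add: prod_eq_iff)
    also have "\<dots> = (a = b)" using nth_eq_iff_index_eq[OF xs(2)] a b unfolding n_def by blast
    finally have eqv: "(fst (xs ! a) = fst (xs ! b) \<and> snd (xs ! a) = snd (xs ! b)) = (a = b)" .
    show "vinner ?I (e a) (e b) = (if a = b then 1 else 0)"
      unfolding e_def vinner_ketS[OF 1(1)] by (cases "a = b") (use eqv 1(2) in auto)
  qed
  have pos: "\<forall>a<n. lam a > 0"
  proof (intro allI impI)
    fix a assume "a < n"
    then have "0 < eta hPhi p k (fst (xs ! a)) (snd (xs ! a))" using inP by (simp add: case_prod_beta)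
    then show "lam a > 0" unfolding lam_def by (rule mu_pos)
  qed
  have M: "SigmaOp chi hPhi p k i j = (\<Sum>a<n. complex_of_real (lam a) * ketbra (e a) (e a) i j)" for i j
  proof -
    have "SigmaOp chi hPhi p k i j = (\<Sum>(y, v)\<in>Ak k \<times> UNIV. complex_of_real (mu y v) *
        ketbra (ketS hPhi p k y v) (ketS hPhi p k y v) i j)"
      unfolding Sigma_ket by (simp add: sum.cartesian_product)
    also have "\<dots> = (\<Sum>(y, v)\<in>?P. complex_of_real (mu y v) *
        ketbra (ketS hPhi p k y v) (ketS hPhi p k y v) i j)"
      by (rule sum.mono_neutral_right) (auto simp: finite_Ak ketbra_def dest: ketS_nz)
    also have "\<dots> = (\<Sum>a<n. complex_of_real (lam a) * ketbra (e a) (e a) i j)"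
    proof -
      let ?g = "\<lambda>(y, v). complex_of_real (mu y v) * ketbra (ketS hPhi p k y v) (ketS hPhi p k y v) i j"
      have "(\<Sum>a<length xs. ?g (xs ! a)) = sum ?g (set xs)"
        by (rule sum.reindex_bij_betw[OF bij_betw_nth[OF xs(2) refl refl]])
      then show ?thesis unfolding xs(1) by (simp add: case_prod_beta n_def e_def lam_def)
    qed
    finally show ?thesis .
  qed
  show ?thesis unfolding is_pinv_sqrt_def
    by (rule exI[where x="\<lambda>i j. \<Sum>a<n. complex_of_real (1 / sqrt (lam a)) * ketbra (e a) (e a) i j"],
        intro exI[where x=n] exI[where x=e] exI[where x=lam]) (use orth pos M in auto)
qed

end

theorem mainTheorem6:
  fixes chi :: "'a::{ab_group_add,finite} \<Rightarrow> 'a \<Rightarrow> complex"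
    and phi :: "'a \<Rightarrow> 'a"
    and hPhi :: "nat \<Rightarrow> 'a \<Rightarrow> 'a"
    and p k :: nat
  assumes p_prime: "prime p"
    and k_pos: "k \<ge> 1"
    and chi_nonzero: "\<And>x y. chi x y \<noteq> 0"
    and chi_hom: "\<And>x y z. chi x (y + z) = chi x y * chi x z"
    and chi_add: "\<And>x x' y. chi (x + x') y = chi x y * chi x' y"
    and chi_sym: "\<And>x y. chi x y = chi y x"
    and chi_inj: "inj chi"
    and phi_bij: "bij phi"
    and phi_add: "\<And>a b. phi (a + b) = phi a + phi b"
    and phi_order: "phi ^^ p = id"
    and hPhi_dual: "\<And>b x d. b < p \<Longrightarrow> chi x (Phi phi b d) = chi (hPhi b x) d"
  shows
    "SigmaOp chi hPhi p k =
       (\<lambda>i j. (of_nat CARD('a) / of_nat ((p * CARD('a)) ^ k)) *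
          (\<Sum>x\<in>Ak k. \<Sum>w\<in>UNIV. of_nat (eta hPhi p k x w) *
             ketbra (ketS hPhi p k x w) (ketS hPhi p k x w) i j))
     \<and> (\<forall>d. density_op (index_set p k) (sigma chi hPhi p k d))
     \<and> (\<exists>R. is_pinv_sqrt (index_set p k) (SigmaOp chi hPhi p k) R)
     \<and> (\<forall>R. is_pinv_sqrt (index_set p k) (SigmaOp chi hPhi p k) R \<longrightarrow>
          (\<forall>j. \<forall>i\<in>index_set p k. \<forall>i'\<in>index_set p k.
             op_mult (index_set p k) (op_mult (index_set p k) R (sigma chi hPhi p k j)) R i i'
               = Eop chi hPhi p k j i i'))
     \<and> (\<forall>d. op_trace (index_set p k) (op_mult (index_set p k) (Eop chi hPhi p k d) (sigma chi hPhi p k d))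
           = of_nat p / of_nat ((p * CARD('a)) ^ (k + 1)) *
             (\<Sum>x\<in>Ak k. (\<Sum>w\<in>UNIV. complex_of_real (sqrt (real (eta hPhi p k x w)))) ^ 2))"
proof -
  interpret setting chi hPhi p k
    by unfold_locales (use chi_nonzero chi_hom chi_add chi_inj prime_gt_0_nat[OF p_prime] in auto)
  show ?thesis
    using Sigma_form density R_exists R_sandwich trace_E_sigma by blast
qed

end
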